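(* Assume the bounded-cost assumption. Let agent $j\in[J]$ use POMWU with learning rate $\eta>0$, and let the contexts $Z_1,\dots,Z_T$, the predictions $\hat Z^j_1,\dots,\hat Z^j_T$ and the other agents' strategies be arbitrary. Then $$\mathrm{Reg}^j_T\le\frac{(5+\ln K)L^j_T+m\ln K}{\eta}+\eta\Big(\sum_{z\in\mathcal Z}\sum_{i=1}^{n_z}\big\|(\Phi^j_{z,i}-\Phi^j_{z,i-1})^\top z\big\|_\infty^2+4L^j_T\Big)-\frac{1}{16\eta}\sum_{z\in\mathcal Z}\sum_{i=1}^{n_z}\big\|w^j_{z,i}-w^j_{z,i-1}\big\|_1^2 .$$
   Context: Setting. There are $J\ge1$ agents indexed by $j\in[J]$. Agent $j$ has a finite action set $\mathcal A^j=\{a^j_1,\dots,a^j_K\}$ with $K$ elements; $\mathcal A=\prod_i\mathcal A^i$, $\mathcal A^{-j}=\prod_{i\ne j}\mathcal A^i$. $\Delta_K$ is the probability simplex in $\mathbb R^K$, $w\in\Delta_K$ identified with a distribution on $\mathcal A^j$; $\mathscr P(S)$ is the set of distributions on a finite set $S$. The context set $\mathcal Z=\{z_1,\dots,z_m\}\subset\mathbb R^d$ is finite with $m$ elements. Agent $j$ has $\phi^j:\mathcal A\to\mathbb R^d$ and cost $c^j(\mathbf w,Z)=\mathbb E_{\mathbf a\sim\mathbf w}[\langle\phi^j(\mathbf a),Z\rangle]$; $c^j(w,\mathbf w^{-j},Z)=c^j(w\otimes\mathbf w^{-j},Z)$. $\Phi^j(\mathbf w^{-j})\in\mathbb R^{d\times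 K}$ has entries $\Phi^j(\mathbf w^{-j})_{\ell,k}=\mathbb E_{\mathbf a^{-j}\sim\mathbf w^{-j}}[\phi^j(a^j_k,\mathbf a^{-j})[\ell]]$, so $c^j(w,\mathbf w^{-j},Z)=\langle Z,\Phi^j(\mathbf w^{-j})w\rangle$. Bounded-cost assumption: $|\langle Z,\phi^j(\mathbf a)\rangle|\le1$ for all $j,\mathbf a\in\mathcal A,Z\in\mathcal Z$. Game protocol: $T$ rounds, fixed sequence $Z_1,\dots,Z_T\in\mathcal Z$; at round $t$ each agent $j$ receives a prediction $\hat Z^j_t\in\mathcal Z$, plays $w^j_t\in\Delta_K$ as a function of past feedback and $\hat Z^j_t$, incurs $c^j(w^j_t,\mathbf w^{-j}_t,Z_t)$ with $\mathbf w^{-j}_t=\bigotimes_{i\ne j}w^i_t$, and observes $Z_t$ and $\Phi^j(\mathbf w^{-j}_t)$. $\mathscr T^z=\{t:Z_t=z\}=\{t^z_1<\dots<t^z_{n_z}\}$, $n_z=|\mathscr T^z|$; $L^j_T=\sum_{t=1}^T\mathbf 1\{\hat Z^j_t\ne Z_t\}$. Contextual external regret: $\mathrm{Reg}^j_T=\sum_{t=1}^Tc^j(w^j_t,\mathbf w^{-j}_t,Z_t)-\min_{\pi:\mathcal Z\to\Delta_K}\sum_{t=1}^Tc^j(\pi(Z_t),\mathbf w^{-j}_t,Z_t)$. POMWU with learning rate $\eta>0$ (for agent $j$): maintain for each $z\in\mathcal Z$ a vector $\rho_z\in\mathbb R^K_{>0}$, initialized to $(1/K,\dots,1/K)$, and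 a matrix $\Psi_z\in\mathbb R^{d\times K}$, initialized to $0$. At round $t$, with $\hat Z=\hat Z^j_t$, play $w^j_t[\ell]=\rho_{\hat Z}[\ell]\exp(-\eta(\Psi_{\hat Z}^\top\hat Z)[\ell])/\sum_{k=1}^K\rho_{\hat Z}[k]\exp(-\eta(\Psi_{\hat Z}^\top\hat Z)[k])$. After observing $Z_t$ and $\Phi_t=\Phi^j(\mathbf w^{-j}_t)$, set $\Psi_{Z_t}\leftarrow\Phi_t$ and $\rho_{Z_t}[\ell]\leftarrow\rho_{Z_t}[\ell]\exp(-\eta(\Phi_t^\top Z_t)[\ell])$ for all $\ell$. Notation: $\Phi^j_{z,i}=\Phi^j(\mathbf w^{-j}_{t^z_i})$, $w^j_{z,i}=w^j_{t^z_i}$ for $1\le i\le n_z$, with conventions $\Phi^j_{z,0}=0\in\mathbb R^{d\times K}$ and $w^j_{z,0}=(1/K,\dots,1/K)$. *)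

theory Defs
  imports "HOL-Analysis.Analysis"
begin

text \<open>Actions of every agent are indexed by 0,...,K-1; agents by 0,...,J-1; rounds by 0,...,T-1.
  A mixed strategy is a function nat => real, meaningful on {..<K}.
  Contexts are vectors in real^'d.\<close>

definition prob_simplex :: "nat \<Rightarrow> (nat \<Rightarrow> real) set" where
  "prob_simplex K = {w. (\<forall>k<K. 0 \<le> w k) \<and> (\<Sum>k<K. w k) = 1}"

definition profiles :: "nat \<Rightarrow> nat \<Rightarrow> (nat \<Rightarrow> nat) set" where
  "profiles J K = PiE {..<J} (\<lambda>_. {..<K})"

text \<open>The matrix Phi^j(w^{-j}) given by its K columns (each in real^'d):
  column k is E_{a^{-j} ~ w^{-j}} [phi^j(a^j_k, a^{-j})], where W i is the mixed
  strategy of agent i (only i ~= j is used).\<close>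
definition Phi_mat :: "nat \<Rightarrow> nat \<Rightarrow> (nat \<Rightarrow> (nat \<Rightarrow> nat) \<Rightarrow> real^'d) \<Rightarrow> nat
    \<Rightarrow> (nat \<Rightarrow> nat \<Rightarrow> real) \<Rightarrow> nat \<Rightarrow> real^'d" where
  "Phi_mat J K \<phi> j W k =
     (\<Sum>a\<in>{a\<in>profiles J K. a j = k}. (\<Prod>i\<in>{..<J} - {j}. W i (a i)) *\<^sub>R \<phi> j a)"

definition lincost :: "nat \<Rightarrow> (nat \<Rightarrow> real^'d) \<Rightarrow> (nat \<Rightarrow> real) \<Rightarrow> real^'d \<Rightarrow> real" where
  "lincost K Phi w Z = (\<Sum>k<K. w k * (Phi k \<bullet> Z))"

definition contextual_regret :: "nat \<Rightarrow> (real^'d) set \<Rightarrow> nat \<Rightarrow> (nat \<Rightarrow> real^'d)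
    \<Rightarrow> (nat \<Rightarrow> nat \<Rightarrow> real^'d) \<Rightarrow> (nat \<Rightarrow> nat \<Rightarrow> real) \<Rightarrow> real" where
  "contextual_regret K Zset T Zs Phis wj =
     (\<Sum>t<T. lincost K (Phis t) (wj t) (Zs t))
     - (INF \<pi>\<in>{\<pi>. \<forall>z\<in>Zset. \<pi> z \<in> prob_simplex K}. \<Sum>t<T. lincost K (Phis t) (\<pi> (Zs t)) (Zs t))"

text \<open>POMWU state (rho, Psi) before round t, i.e. after the updates of rounds 0..t-1.\<close>
fun pomwu_state :: "real \<Rightarrow> nat \<Rightarrow> (nat \<Rightarrow> real^'d) \<Rightarrow> (nat \<Rightarrow> nat \<Rightarrow> real^'d) \<Rightarrow> nat
    \<Rightarrow> (real^'d \<Rightarrow> nat \<Rightarrow> real) \<times> (real^'d \<Rightarrow> nat \<Rightarrow> real^'d)" where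
  "pomwu_state \<eta> K Zs Phis 0 = ((\<lambda>z l. 1 / real K), (\<lambda>z l. 0))"
| "pomwu_state \<eta> K Zs Phis (Suc t) =
     (case pomwu_state \<eta> K Zs Phis t of (\<rho>, \<Psi>) \<Rightarrow>
        (\<rho>(Zs t := (\<lambda>l. \<rho> (Zs t) l * exp (- \<eta> * (Phis t l \<bullet> Zs t)))),
         \<Psi>(Zs t := Phis t)))"

definition pomwu_weights :: "real \<Rightarrow> nat \<Rightarrow> (nat \<Rightarrow> real^'d) \<Rightarrow> (nat \<Rightarrow> nat \<Rightarrow> real^'d)
    \<Rightarrow> (nat \<Rightarrow> real^'d) \<Rightarrow> nat \<Rightarrow> nat \<Rightarrow> real" where
  "pomwu_weights \<eta> K Zs Phis Zhat t l =
     (case pomwu_state \<eta> K Zs Phis t of (\<rho>, \<Psi>) \<Rightarrow>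
        \<rho> (Zhat t) l * exp (- \<eta> * (\<Psi> (Zhat t) l \<bullet> Zhat t))
        / (\<Sum>k<K. \<rho> (Zhat t) k * exp (- \<eta> * (\<Psi> (Zhat t) k \<bullet> Zhat t))))"

text \<open>The rounds t^z_1 < ... < t^z_{n_z} (0-based list) at which context z occurs.\<close>
definition occ_rounds :: "nat \<Rightarrow> (nat \<Rightarrow> 'a) \<Rightarrow> 'a \<Rightarrow> nat list" where
  "occ_rounds T Zs z = sorted_list_of_set {t. t < T \<and> Zs t = z}"

text \<open>x_{z,i}: value at the i-th occurrence (1-based), with x_{z,0} = init.\<close>
definition at_occ :: "(nat \<Rightarrow> 'b) \<Rightarrow> 'b \<Rightarrow> nat list \<Rightarrow> nat \<Rightarrow> 'b" where
  "at_occ f init ts i = (if i = 0 then init else f (ts ! (i - 1)))"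

definition linf_norm :: "nat \<Rightarrow> (nat \<Rightarrow> real) \<Rightarrow> real" where
  "linf_norm K v = Max ((\<lambda>k. \<bar>v k\<bar>) ` {..<K})"

definition l1_norm :: "nat \<Rightarrow> (nat \<Rightarrow> real) \<Rightarrow> real" where
  "l1_norm K v = (\<Sum>k<K. \<bar>v k\<bar>)"

end

theory Submission
  imports Defs
begin

lemma kfun_deriv:
  assumes "0 < x"
  shows "((\<lambda>x. ln x - 3*(x-1)*(x+5)/(2*(x+2)^2)) has_real_derivative (1/x - 27/(x+2)^3)) (at x)"
proof -
  have "((\<lambda>x. ln x - 3*(x-1)*(x+5)/(2*(x+2)^2)) has_real_derivative
     (1/x - ((3*((x+5) + (x-1)))*(2*(x+2)^2) - 3*(x-1)*(x+5)*(2*(2*(x+2))))/(2*(x+2)^2)^2)) (at x)"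
    using assms by (auto intro!: derivative_eq_intros simp: power2_eq_square)
  moreover have "((3*((x+5) + (x-1)))*(2*(x+2)^2) - 3*(x-1)*(x+5)*(2*(2*(x+2))))/(2*(x+2)^2)^2 = 27/(x+2)^3"
    using assms by (simp add: divide_simps) (simp add: algebra_simps power2_eq_square power3_eq_cube eval_nat_numeral)
  ultimately show ?thesis by simp
qed

lemma kfun_deriv_nonneg:
  assumes "0 < (x::real)" shows "0 \<le> 1/x - 27/(x+2)^3"
proof -
  have "27 * x \<le> (x+2)^3"
  proof -
    have "(x+2)^3 - 27*x = (x-1)^2*(x+8)" by (simp add: power2_eq_square power3_eq_cube algebra_simps)
    moreover have "(x-1)^2*(x+8) \<ge> 0" using assms by simp
    ultimately show ?thesis by linarith
  qed
  hence "27/(x+2)^3 \<le> 1/x" using assms by (simp add: field_simps)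
  thus ?thesis by simp
qed

lemma kfun_sign:
  fixes x :: real assumes "0 < x"
  shows "(1 \<le> x \<longrightarrow> 0 \<le> ln x - 3*(x-1)*(x+5)/(2*(x+2)^2)) \<and> (x \<le> 1 \<longrightarrow> ln x - 3*(x-1)*(x+5)/(2*(x+2)^2) \<le> 0)"
proof -
  define k where "k = (\<lambda>x::real. ln x - 3*(x-1)*(x+5)/(2*(x+2)^2))"
  have k1: "k 1 = 0" by (simp add: k_def)
  have mono: "k a \<le> k b" if "0 < a" "a \<le> b" for a b
    apply (rule deriv_nonneg_imp_mono[where g=k and g'="\<lambda>x. 1/x - 27/(x+2)^3"])
    using that kfun_deriv kfun_deriv_nonneg unfolding k_def by auto
  show ?thesis using mono[of 1 x] mono[of x 1] assms k1 unfolding k_def by auto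
qed

lemma gfun_nonneg:
  fixes x :: real assumes "0 < x"
  shows "3*(x-1)^2/(2*(x+2)) \<le> x * ln x - x + 1"
proof -
  define g where "g = (\<lambda>x::real. x * ln x - x + 1 - 3*(x-1)^2/(2*(x+2)))"
  have gd: "(g has_real_derivative (ln x - 3*(x-1)*(x+5)/(2*(x+2)^2))) (at x)" if "0 < x" for x
  proof -
    have "(g has_real_derivative (1 * ln x + x * (1/x) - 1 - (3*(2*(x-1))*(2*(x+2)) - 3*(x-1)^2*2)/(2*(x+2))^2)) (at x)"
      unfolding g_def using that by (auto intro!: derivative_eq_intros simp: power2_eq_square)
    moreover have "1 * ln x + x * (1/x) - 1 - (3*(2*(x-1))*(2*(x+2)) - 3*(x-1)^2*2)/(2*(x+2))^2
        = ln x - 3*(x-1)*(x+5)/(2*(x+2)^2)"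
      using that by (simp add: divide_simps) (simp add: algebra_simps power2_eq_square)
    ultimately show ?thesis by metis
  qed
  have g1: "g 1 = 0" by (simp add: g_def)
  have "0 \<le> g x"
  proof (cases "1 \<le> x")
    case True
    have "g 1 \<le> g x"
      apply (rule deriv_nonneg_imp_mono[where g=g and g'="\<lambda>x. ln x - 3*(x-1)*(x+5)/(2*(x+2)^2)"])
      using gd kfun_sign True by auto
    then show ?thesis using g1 by simp
  next
    case False
    have "g 1 \<le> g x"
      apply (rule deriv_nonpos_imp_antimono[where g=g and g'="\<lambda>x. ln x - 3*(x-1)*(x+5)/(2*(x+2)^2)"])
      using gd kfun_sign False assms by auto
    then show ?thesis using g1 by simp
  qed
  thus ?thesis by (simp add: g_def)
qed

lemma coord_pinsker:
  fixes p q :: real assumes "0 < p" "0 < q"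
  shows "3*(p-q)^2/(2*(p+2*q)) \<le> p * ln (p/q) - p + q"
proof -
  have h: "3*(p/q-1)^2/(2*(p/q+2)) \<le> (p/q) * ln (p/q) - p/q + 1" using gfun_nonneg[of "p/q"] assms by simp
  have "q * (3*(p/q-1)^2/(2*(p/q+2))) \<le> q * ((p/q) * ln (p/q) - p/q + 1)"
    by (rule mult_left_mono[OF h]) (use assms in simp)
  moreover have "q * (3*(p/q-1)^2/(2*(p/q+2))) = 3*(p-q)^2/(2*(p+2*q))"
  proof -
    have e1: "p/q - 1 = (p-q)/q" "p/q+2 = (p+2*q)/q" using assms by (auto simp: field_simps)
    have "p + 2*q > 0" using assms by simp
    then show ?thesis unfolding e1 using assms by (simp add: power2_eq_square divide_simps)
  qed
  moreover have "q * ((p/q) * ln (p/q) - p/q + 1) = p * ln (p/q) - p + q"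
    using assms by (simp add: field_simps)
  ultimately show ?thesis by simp
qed

definition sm :: "nat \<Rightarrow> (nat \<Rightarrow> real) \<Rightarrow> nat \<Rightarrow> real" where
  "sm K v k = exp (v k) / (\<Sum>k'<K. exp (v k'))"
definition lse :: "nat \<Rightarrow> (nat \<Rightarrow> real) \<Rightarrow> real" where
  "lse K v = ln (\<Sum>k<K. exp (v k))"
definition KL :: "nat \<Rightarrow> (nat \<Rightarrow> real) \<Rightarrow> (nat \<Rightarrow> real) \<Rightarrow> real" where
  "KL K p q = (\<Sum>k<K. p k * ln (p k / q k))"
definition ip :: "nat \<Rightarrow> (nat \<Rightarrow> real) \<Rightarrow> (nat \<Rightarrow> real) \<Rightarrow> real" where
  "ip K a b = (\<Sum>k<K. a k * b k)"

lemma sumexp_pos: "1 \<le> (K::nat) \<Longrightarrow> 0 < (\<Sum>k<K. exp (v k :: real))"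
proof -
  assume "1 \<le> K"
  hence "0 \<in> {..<K}" by simp
  hence ne: "{..<K} \<noteq> {}" by blast
  show ?thesis by (rule sum_pos) (use ne in auto)
qed

lemma sm_pos: "1 \<le> K \<Longrightarrow> 0 < sm K v k"
  unfolding sm_def by (intro divide_pos_pos) (auto intro: sumexp_pos)

lemma sm_sum: "1 \<le> K \<Longrightarrow> (\<Sum>k<K. sm K v k) = 1"
  unfolding sm_def using sumexp_pos[of K v] by (simp add: sum_divide_distrib[symmetric])

lemma sm_simplex: "1 \<le> K \<Longrightarrow> sm K v \<in> prob_simplex K"
  unfolding prob_simplex_def using sm_sum sm_pos by (auto intro: less_imp_le)

lemma KL_sm:
  assumes "1 \<le> K"
  shows "KL K (sm K a) (sm K b) = ip K (sm K a) (\<lambda>k. a k - b k) - lse K a + lse K b"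
proof -
  have "ln (sm K a k / sm K b k) = a k - b k - lse K a + lse K b" for k
  proof -
    have lnsm: "ln (sm K a k) = a k - lse K a" for a
      unfolding sm_def lse_def using sumexp_pos[OF assms, of a] by (simp add: ln_div)
    have "ln (sm K a k / sm K b k) = ln (sm K a k) - ln (sm K b k)"
      using sm_pos[OF assms, of a k] sm_pos[OF assms, of b k] by (simp add: ln_div)
    then show ?thesis unfolding lnsm by simp
  qed
  note eq = this
  have "KL K (sm K a) (sm K b) = (\<Sum>k<K. sm K a k * (a k - b k) + (lse K b - lse K a) * sm K a k)"
    unfolding KL_def by (rule sum.cong) (simp_all add: eq algebra_simps)
  also have "\<dots> = ip K (sm K a) (\<lambda>k. a k - b k) + (lse K b - lse K a) * (\<Sum>k<K. sm K a k)"
    by (simp add: sum.distrib sum_distrib_left ip_def)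
  finally show ?thesis using sm_sum[OF assms] by simp
qed

lemma amgm_aux:
  fixes a c t :: real assumes "0 < c"
  shows "2*t*\<bar>a\<bar> - t^2*c \<le> a^2/c"
proof -
  have "0 \<le> (\<bar>a\<bar> - t*c)^2" by simp
  hence "2*t*c*\<bar>a\<bar> - t^2*c^2 \<le> a^2" by (simp add: power2_eq_square algebra_simps)
  hence "(2*t*\<bar>a\<bar> - t^2*c) * c \<le> a^2" by (simp add: power2_eq_square algebra_simps)
  thus ?thesis using assms by (simp add: field_simps)
qed

lemma pinsker:
  assumes K: "1 \<le> K" and pp: "\<And>k. k < K \<Longrightarrow> 0 < p k" and qp: "\<And>k. k < K \<Longrightarrow> 0 < q k"
    and ps: "(\<Sum>k<K. p k) = 1" and qs: "(\<Sum>k<K. q k) = 1"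
  shows "(l1_norm K (\<lambda>k. p k - q k))^2 / 2 \<le> KL K p q"
proof -
  define dd where "dd = l1_norm K (\<lambda>k. p k - q k)"
  define t where "t = dd/2"
  define c where "c = (\<lambda>k. 2*(p k + 2*q k)/3)"
  have "(\<Sum>k<K. 2*t*abs (p k - q k) - t^2 * c k) = 2*t*dd - t^2 * (\<Sum>k<K. c k)"
    unfolding dd_def l1_norm_def by (simp add: sum_subtractf sum_distrib_left)
  also have "(\<Sum>k<K. c k) = 2"
    unfolding c_def using ps qs by (simp add: sum_divide_distrib[symmetric] sum.distrib sum_distrib_left[symmetric])
  finally have e: "(\<Sum>k<K. 2*t*abs (p k - q k) - t^2 * c k) = dd^2/2" unfolding t_def by (simp add: power2_eq_square)
  have "(\<Sum>k<K. 2*t*abs (p k - q k) - t^2 * c k) \<le> (\<Sum>k<K. (p k - q k)^2 / c k)"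
    by (rule sum_mono, rule amgm_aux) (use pp qp in \<open>auto simp: c_def intro!: add_pos_pos\<close>)
  also have "\<dots> \<le> (\<Sum>k<K. p k * ln (p k / q k) - p k + q k)"
  proof (rule sum_mono)
    fix k assume "k \<in> {..<K}"
    hence "0 < p k" "0 < q k" using pp qp by auto
    then have "3*(p k-q k)^2/(2*(p k+2*q k)) \<le> p k * ln (p k/q k) - p k + q k"
      by (rule coord_pinsker)
    moreover have "3*(p k-q k)^2/(2*(p k+2*q k)) = (p k - q k)^2 / c k"
      unfolding c_def by (simp add: field_simps)
    ultimately show "(p k - q k)^2 / c k \<le> p k * ln (p k / q k) - p k + q k" by simp
  qed
  also have "\<dots> = KL K p q"
    unfolding KL_def using ps qs by (simp add: sum.distrib sum_subtractf)
  finally show ?thesis using e unfolding dd_def by simp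
qed

definition cum :: "(nat \<Rightarrow> nat \<Rightarrow> real) \<Rightarrow> nat \<Rightarrow> nat \<Rightarrow> real" where
  "cum lv j k = (\<Sum>r\<in>{Suc 0..j}. lv r k)"

definition xo :: "real \<Rightarrow> nat \<Rightarrow> (nat \<Rightarrow> nat \<Rightarrow> real) \<Rightarrow> nat \<Rightarrow> nat \<Rightarrow> real" where
  "xo \<eta> K lv i = sm K (\<lambda>k. - \<eta> * (cum lv (i-1) k + lv (i-1) k))"

definition go :: "real \<Rightarrow> nat \<Rightarrow> (nat \<Rightarrow> nat \<Rightarrow> real) \<Rightarrow> nat \<Rightarrow> nat \<Rightarrow> real" where
  "go \<eta> K lv i = sm K (\<lambda>k. - \<eta> * cum lv (i-1) k)"

lemma cum_Suc: "cum lv (Suc j) k = cum lv j k + lv (Suc j) k"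
  unfolding cum_def by simp

lemma linf_ge: "1 \<le> K \<Longrightarrow> k < K \<Longrightarrow> \<bar>f k\<bar> \<le> linf_norm K f"
  unfolding linf_norm_def by (intro Max_ge) auto

lemma linf_nonneg: "1 \<le> K \<Longrightarrow> 0 \<le> linf_norm K f"
  using linf_ge[of K 0 f] by simp

lemma l1_nonneg: "0 \<le> l1_norm K f"
  unfolding l1_norm_def by (simp add: sum_nonneg)

lemma holder: assumes "1 \<le> K" shows "ip K f g \<le> linf_norm K f * l1_norm K g"
proof -
  have "ip K f g \<le> (\<Sum>k<K. linf_norm K f * \<bar>g k\<bar>)"
    unfolding ip_def
  proof (rule sum_mono)
    fix k assume "k \<in> {..<K}"
    hence "\<bar>f k\<bar> \<le> linf_norm K f" using linf_ge assms by auto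
    hence "\<bar>f k\<bar> * \<bar>g k\<bar> \<le> linf_norm K f * \<bar>g k\<bar>" by (rule mult_right_mono) simp
    moreover have "f k * g k \<le> \<bar>f k\<bar> * \<bar>g k\<bar>" by (simp add: abs_mult[symmetric])
    ultimately show "f k * g k \<le> linf_norm K f * \<bar>g k\<bar>" by linarith
  qed
  thus ?thesis unfolding l1_norm_def by (simp add: sum_distrib_left)
qed

lemma young: fixes a b \<eta> :: real assumes "0 < \<eta>" shows "a * b \<le> \<eta> * a^2 + b^2 / (4*\<eta>)"
proof -
  have "0 \<le> (2*\<eta>*a - b)^2" by simp
  hence "4*\<eta>*(a*b) \<le> 4*\<eta>*(\<eta> * a^2) + b^2" by (simp add: power2_eq_square algebra_simps)
  hence "4*\<eta>*(a*b) \<le> 4*\<eta>*(\<eta> * a^2 + b^2 / (4*\<eta>))" using assms by (simp add: algebra_simps)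
  thus ?thesis using assms by simp
qed

lemma omwu_step:
  assumes K: "1 \<le> K" and eta: "0 < \<eta>" and i: "1 \<le> i"
  shows "ip K (lv i) (xo \<eta> K lv i)
           + (lse K (\<lambda>k. - \<eta> * cum lv i k) - lse K (\<lambda>k. - \<eta> * cum lv (i-1) k)) / \<eta>
         \<le> \<eta> * (linf_norm K (\<lambda>k. lv i k - lv (i-1) k))^2
           - (l1_norm K (\<lambda>k. xo \<eta> K lv i k - go \<eta> K lv (Suc i) k))^2 / (4*\<eta>)
           - (l1_norm K (\<lambda>k. xo \<eta> K lv i k - go \<eta> K lv i k))^2 / (2*\<eta>)"
proof -
  define a where "a = (\<lambda>k. - \<eta> * cum lv (i-1) k)"
  define a' where "a' = (\<lambda>k. - \<eta> * cum lv i k)"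
  define b where "b = (\<lambda>k. - \<eta> * (cum lv (i-1) k + lv (i-1) k))"
  define m where "m = lv (i-1)"
  define x where "x = sm K b"
  define g where "g = sm K a"
  define g' where "g' = sm K a'"
  have xx: "xo \<eta> K lv i = x" unfolding x_def xo_def b_def ..
  have gg: "go \<eta> K lv i = g" unfolding g_def go_def a_def ..
  have gg': "go \<eta> K lv (Suc i) = g'" unfolding g'_def go_def a'_def by simp
  have cumi: "cum lv i k = cum lv (i-1) k + lv i k" for k
    using i cum_Suc[of lv "i-1" k] by simp
  define P where "P = ip K (lv i) x"
  define Q where "Q = ip K m x"
  define R where "R = ip K (lv i) g'"
  define S where "S = ip K m g'"
  define A where "A = (l1_norm K (\<lambda>k. x k - g k))^2"
  define B where "B = (l1_norm K (\<lambda>k. x k - g' k))^2"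
  define lin where "lin = linf_norm K (\<lambda>k. lv i k - m k)"
  have F1: "KL K g' x = - \<eta> * (R - S) - lse K a' + lse K b"
  proof -
    have "KL K g' x = ip K g' (\<lambda>k. a' k - b k) - lse K a' + lse K b"
      unfolding g'_def x_def by (rule KL_sm[OF K])
    moreover have "ip K g' (\<lambda>k. a' k - b k) = - \<eta> * (R - S)"
      unfolding R_def S_def ip_def a'_def b_def m_def cumi
      by (simp add: algebra_simps sum_distrib_left sum_subtractf sum_negf)
    ultimately show ?thesis by simp
  qed
  have F2: "KL K x g = - \<eta> * Q - lse K b + lse K a"
  proof -
    have "KL K x g = ip K x (\<lambda>k. b k - a k) - lse K b + lse K a"
      unfolding g_def x_def by (rule KL_sm[OF K])
    moreover have "ip K x (\<lambda>k. b k - a k) = - \<eta> * Q"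
      unfolding Q_def ip_def a_def b_def m_def
      by (simp add: algebra_simps sum_distrib_left sum_subtractf sum_negf)
    ultimately show ?thesis by simp
  qed
  have F4: "B/2 \<le> KL K g' x"
    unfolding B_def
    using pinsker[OF K, of g' x] sm_pos[OF K] sm_sum[OF K] unfolding g'_def x_def
    by (simp add: l1_norm_def abs_minus_commute)
  have F5: "A/2 \<le> KL K x g"
    unfolding A_def
    using pinsker[OF K, of x g] sm_pos[OF K] sm_sum[OF K] unfolding g_def x_def
    by simp
  have F3: "P - Q - R + S \<le> \<eta> * lin^2 + B/(4*\<eta>)"
  proof -
    have "P - Q - R + S = ip K (\<lambda>k. lv i k - m k) (\<lambda>k. x k - g' k)"
      unfolding P_def Q_def R_def S_def ip_def by (simp add: algebra_simps sum_subtractf sum.distrib)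
    also have "\<dots> \<le> lin * l1_norm K (\<lambda>k. x k - g' k)"
      unfolding lin_def by (rule holder[OF K])
    also have "\<dots> \<le> \<eta> * lin^2 + B/(4*\<eta>)"
      unfolding B_def by (rule young[OF eta])
    finally show ?thesis .
  qed
  have D1: "(lse K a' - lse K a)/\<eta> = -(R - S + Q) - (KL K g' x + KL K x g)/\<eta>"
    using F1 F2 eta by (simp add: field_simps)
  have D2: "(A + B)/(2*\<eta>) \<le> (KL K g' x + KL K x g)/\<eta>"
  proof -
    have "(A+B)/2 \<le> KL K g' x + KL K x g" using F4 F5 by simp
    hence "((A+B)/2)/\<eta> \<le> (KL K g' x + KL K x g)/\<eta>" using eta by (intro divide_right_mono) auto
    thus ?thesis by (simp add: field_split_simps)
  qed
  have D3: "B/(4*\<eta>) - (A + B)/(2*\<eta>) = - B/(4*\<eta>) - A/(2*\<eta>)"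
    using eta by (simp add: field_simps)
  have "P + (lse K a' - lse K a)/\<eta> \<le> \<eta> * lin^2 - B/(4*\<eta>) - A/(2*\<eta>)"
    using D1 D2 D3 F3 by linarith
  then show ?thesis unfolding xx gg gg' P_def A_def B_def lin_def m_def a_def a'_def by simp
qed

lemma shift_le:
  fixes f :: "nat \<Rightarrow> real"
  assumes "f 0 = 0" "\<And>i. 0 \<le> f i"
  shows "(\<Sum>i\<in>{1..n}. f (i-1)) \<le> (\<Sum>i\<in>{1..n}. f i)"
proof -
  have e1: "(\<Sum>i\<in>{1..n}. f (i-1)) = (\<Sum>i<n. f i)"
    using sum.atLeast1_atMost_eq[of "\<lambda>i. f (i-1)" n] by simp
  have e2: "(\<Sum>i\<in>{1..n}. f i) = (\<Sum>i<n. f (Suc i))"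
    using sum.atLeast1_atMost_eq[of f n] by simp
  have "(\<Sum>i<n. f i) \<le> (\<Sum>i<n. f (Suc i))"
  proof (cases n)
    case 0 then show ?thesis by simp
  next
    case (Suc n')
    have "(\<Sum>i<n. f i) = (\<Sum>i<n'. f (Suc i))"
      unfolding Suc sum.lessThan_Suc_shift using assms(1) by simp
    also have "\<dots> \<le> (\<Sum>i<n. f (Suc i))" unfolding Suc using assms(2) by simp
    finally show ?thesis .
  qed
  thus ?thesis using e1 e2 by simp
qed

lemma telescope_minus:
  fixes f :: "nat \<Rightarrow> real"
  shows "(\<Sum>i\<in>{1..n}. f i - f (i-1)) = f n - f 0"
  by (induction n) auto

lemma l1_triangle: "l1_norm K (\<lambda>k. x k - y k) \<le> l1_norm K (\<lambda>k. x k - g k) + l1_norm K (\<lambda>k. y k - g k)"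
  unfolding l1_norm_def sum.distrib[symmetric] by (rule sum_mono) linarith

lemma sq_sum_le: fixes a b c :: real assumes "0 \<le> c" "c \<le> a + b" shows "c^2 \<le> 2*a^2 + 2*b^2"
proof -
  have "c^2 \<le> (a+b)^2" using assms by (simp add: power_mono)
  also have "\<dots> \<le> 2*a^2 + 2*b^2" using sum_squares_ge_zero[of "a-b" 0]
    by (simp add: power2_eq_square algebra_simps)
  finally show ?thesis .
qed

lemma lse_zero: "lse K (\<lambda>k. 0) = ln (real K)"
  unfolding lse_def by simp

lemma ip_lower:
  assumes K: "1 \<le> K" and eta: "0 < \<eta>" and u: "u \<in> prob_simplex K"
  shows "- lse K (\<lambda>k. - \<eta> * c k) / \<eta> \<le> ip K c u"
proof -
  have "- lse K (\<lambda>k. - \<eta> * c k) / \<eta> \<le> c k" if "k < K" for k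
  proof -
    have "exp (- \<eta> * c k) \<le> (\<Sum>k<K. exp (- \<eta> * c k))"
      by (rule member_le_sum) (use that in auto)
    hence "ln (exp (- \<eta> * c k)) \<le> lse K (\<lambda>k. - \<eta> * c k)"
      unfolding lse_def using sumexp_pos[OF K] by (subst ln_le_cancel_iff) auto
    hence "- \<eta> * c k \<le> lse K (\<lambda>k. - \<eta> * c k)" by simp
    thus ?thesis using eta by (simp add: field_simps)
  qed
  note h = this
  have "(\<Sum>k<K. u k * (- lse K (\<lambda>k. - \<eta> * c k) / \<eta>)) \<le> (\<Sum>k<K. c k * u k)"
  proof (rule sum_mono)
    fix k assume k: "k \<in> {..<K}"
    hence "0 \<le> u k" using u unfolding prob_simplex_def by auto
    from mult_left_mono[OF h[of k] this] k show "u k * (- lse K (\<lambda>k. - \<eta> * c k) / \<eta>) \<le> c k * u k"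
      by (simp add: mult.commute)
  qed
  moreover have "(\<Sum>k<K. u k * (- lse K (\<lambda>k. - \<eta> * c k) / \<eta>)) = - lse K (\<lambda>k. - \<eta> * c k) / \<eta>"
    using u unfolding prob_simplex_def by (simp add: sum_distrib_right[symmetric] sum_negf sum_divide_distrib[symmetric])
  ultimately show ?thesis unfolding ip_def by simp
qed

lemma ip_diff: "ip K f (\<lambda>k. a k - b k) = ip K f a - ip K f b"
  unfolding ip_def by (simp add: algebra_simps sum_subtractf)

lemma omwu:
  assumes K: "1 \<le> K" and eta: "0 < \<eta>" and u: "u \<in> prob_simplex K" and l0: "\<And>k. lv 0 k = 0"
  shows "(\<Sum>i\<in>{1..n}. ip K (lv i) (\<lambda>k. xo \<eta> K lv i k - u k))
     \<le> ln (real K) / \<eta> + \<eta> * (\<Sum>i\<in>{1..n}. (linf_norm K (\<lambda>k. lv i k - lv (i-1) k))^2)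
       - 1/(8*\<eta>) * (\<Sum>i\<in>{1..n}. (l1_norm K (\<lambda>k. xo \<eta> K lv i k - xo \<eta> K lv (i-1) k))^2)"
proof -
  define LS where "LS = (\<lambda>j. lse K (\<lambda>k. - \<eta> * cum lv j k))"
  define A where "A = (\<lambda>i. (l1_norm K (\<lambda>k. xo \<eta> K lv i k - go \<eta> K lv i k))^2)"
  define B where "B = (\<lambda>i. (l1_norm K (\<lambda>k. xo \<eta> K lv i k - go \<eta> K lv (Suc i) k))^2)"
  define lin where "lin = (\<lambda>i. (linf_norm K (\<lambda>k. lv i k - lv (i-1) k))^2)"
  define D where "D = (\<lambda>i. (l1_norm K (\<lambda>k. xo \<eta> K lv i k - xo \<eta> K lv (i-1) k))^2)"
  have step: "ip K (lv i) (xo \<eta> K lv i) + (LS i - LS (i-1))/\<eta> \<le> \<eta> * lin i - B i/(4*\<eta>) - A i/(2*\<eta>)"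
    if "i \<in> {1..n}" for i
    using omwu_step[OF K eta, of i lv] that unfolding LS_def A_def B_def lin_def by simp
  have "(\<Sum>i\<in>{1..n}. ip K (lv i) (xo \<eta> K lv i) + (LS i - LS (i-1))/\<eta>)
      \<le> (\<Sum>i\<in>{1..n}. \<eta> * lin i - B i/(4*\<eta>) - A i/(2*\<eta>))"
    by (rule sum_mono) (rule step)
  moreover have "(\<Sum>i\<in>{1..n}. ip K (lv i) (xo \<eta> K lv i) + (LS i - LS (i-1))/\<eta>)
      = (\<Sum>i\<in>{1..n}. ip K (lv i) (xo \<eta> K lv i)) + (LS n - LS 0)/\<eta>"
    using telescope_minus[of LS n] by (simp add: sum.distrib sum_divide_distrib[symmetric])
  moreover have "(\<Sum>i\<in>{1..n}. \<eta> * lin i - B i/(4*\<eta>) - A i/(2*\<eta>))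
      = \<eta> * (\<Sum>i\<in>{1..n}. lin i) - (\<Sum>i\<in>{1..n}. B i)/(4*\<eta>) - (\<Sum>i\<in>{1..n}. A i)/(2*\<eta>)"
    by (simp add: sum_subtractf sum_distrib_left sum_divide_distrib[symmetric])
  ultimately have S1: "(\<Sum>i\<in>{1..n}. ip K (lv i) (xo \<eta> K lv i)) + (LS n - LS 0)/\<eta>
      \<le> \<eta> * (\<Sum>i\<in>{1..n}. lin i) - (\<Sum>i\<in>{1..n}. B i)/(4*\<eta>) - (\<Sum>i\<in>{1..n}. A i)/(2*\<eta>)"
    by simp
  have LS0: "LS 0 = ln (real K)"
    unfolding LS_def cum_def by (simp add: lse_def)
  have S2: "(\<Sum>i\<in>{1..n}. ip K (lv i) u) = ip K (cum lv n) u"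
    unfolding ip_def cum_def by (simp add: sum_distrib_right) (rule sum.swap)
  have S3: "- LS n / \<eta> \<le> ip K (cum lv n) u"
    unfolding LS_def by (rule ip_lower[OF K eta u])
  have S4: "(\<Sum>i\<in>{1..n}. ip K (lv i) (\<lambda>k. xo \<eta> K lv i k - u k))
      = (\<Sum>i\<in>{1..n}. ip K (lv i) (xo \<eta> K lv i)) - (\<Sum>i\<in>{1..n}. ip K (lv i) u)"
    by (simp add: ip_diff sum_subtractf)
  have Dle: "D i \<le> 2 * A i + 2 * B (i-1)" if "i \<in> {1..n}" for i
  proof -
    have "l1_norm K (\<lambda>k. xo \<eta> K lv i k - xo \<eta> K lv (i-1) k)
      \<le> l1_norm K (\<lambda>k. xo \<eta> K lv i k - go \<eta> K lv i k) + l1_norm K (\<lambda>k. xo \<eta> K lv (i-1) k - go \<eta> K lv i k)"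
      by (rule l1_triangle)
    moreover have "Suc (i-1) = i" using that by simp
    ultimately show ?thesis unfolding D_def A_def B_def
      by (intro sq_sum_le) (auto simp: l1_nonneg)
  qed
  have B0: "B 0 = 0"
  proof -
    have e: "xo \<eta> K lv 0 k = go \<eta> K lv (Suc 0) k" for k unfolding xo_def go_def using l0 by simp
    show ?thesis unfolding B_def l1_norm_def e by simp
  qed
  have Bsh: "(\<Sum>i\<in>{1..n}. B (i-1)) \<le> (\<Sum>i\<in>{1..n}. B i)"
    by (rule shift_le[of B, OF B0]) (simp add: B_def)
  have SD: "(\<Sum>i\<in>{1..n}. D i) \<le> 2 * (\<Sum>i\<in>{1..n}. A i) + 2 * (\<Sum>i\<in>{1..n}. B i)"
  proof -
    have "(\<Sum>i\<in>{1..n}. D i) \<le> (\<Sum>i\<in>{1..n}. 2 * A i + 2 * B (i-1))"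
      by (rule sum_mono) (rule Dle)
    also have "\<dots> = 2 * (\<Sum>i\<in>{1..n}. A i) + 2 * (\<Sum>i\<in>{1..n}. B (i-1))"
      by (simp add: sum.distrib sum_distrib_left)
    finally show ?thesis using Bsh by linarith
  qed
  have SA: "0 \<le> (\<Sum>i\<in>{1..n}. A i)" unfolding A_def by (simp add: sum_nonneg)
  define qA where "qA = (\<Sum>i\<in>{1..n}. A i)"
  define qB where "qB = (\<Sum>i\<in>{1..n}. B i)"
  define qD where "qD = (\<Sum>i\<in>{1..n}. D i)"
  have fin: "1/(8*\<eta>) * qD \<le> qB/(4*\<eta>) + qA/(2*\<eta>)"
  proof -
    have "1/(8*\<eta>) * qD \<le> 1/(8*\<eta>) * (2*qA + 2*qB)"
      using SD eta unfolding qA_def qB_def qD_def by (intro mult_left_mono) auto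
    also have "\<dots> = qA/(4*\<eta>) + qB/(4*\<eta>)" using eta by (simp add: field_simps)
    also have "\<dots> \<le> qB/(4*\<eta>) + qA/(2*\<eta>)"
      using SA eta unfolding qA_def by (simp add: field_simps)
    finally show ?thesis .
  qed
  have e1: "(LS n - LS 0)/\<eta> = LS n/\<eta> - ln (real K)/\<eta>" using LS0 by (simp add: diff_divide_distrib)
  have fin': "1/(8*\<eta>) * qD \<le> (\<Sum>i\<in>{1..n}. B i)/(4*\<eta>) + (\<Sum>i\<in>{1..n}. A i)/(2*\<eta>)"
    using fin unfolding qA_def qB_def .
  have S3': "- (LS n / \<eta>) \<le> ip K (cum lv n) u" using S3 by simp
  have "(\<Sum>i\<in>{1..n}. ip K (lv i) (\<lambda>k. xo \<eta> K lv i k - u k))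
     \<le> ln (real K) / \<eta> + \<eta> * (\<Sum>i\<in>{1..n}. lin i) - 1/(8*\<eta>) * qD"
    using S1 S2 S3' S4 fin' e1 by linarith
  thus ?thesis unfolding qD_def D_def lin_def .
qed

lemma l1_simplex_diff:
  assumes "p \<in> prob_simplex K" "q \<in> prob_simplex K"
  shows "l1_norm K (\<lambda>k. p k - q k) \<le> 2"
proof -
  have "l1_norm K (\<lambda>k. p k - q k) \<le> (\<Sum>k<K. p k + q k)"
    unfolding l1_norm_def
  proof (rule sum_mono)
    fix k assume "k \<in> {..<K}"
    hence "0 \<le> p k" "0 \<le> q k" using assms unfolding prob_simplex_def by auto
    thus "\<bar>p k - q k\<bar> \<le> p k + q k" by linarith
  qed
  also have "\<dots> = 2" using assms unfolding prob_simplex_def by (simp add: sum.distrib)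
  finally show ?thesis .
qed

lemma ip_simplex_diff:
  assumes "p \<in> prob_simplex K" "q \<in> prob_simplex K" "\<And>k. k < K \<Longrightarrow> \<bar>f k\<bar> \<le> 1"
  shows "ip K f (\<lambda>k. p k - q k) \<le> 2"
proof -
  have "ip K f (\<lambda>k. p k - q k) \<le> l1_norm K (\<lambda>k. p k - q k)"
    unfolding ip_def l1_norm_def
  proof (rule sum_mono)
    fix k assume "k \<in> {..<K}"
    hence "\<bar>f k\<bar> \<le> 1" using assms by auto
    hence "\<bar>f k\<bar> * \<bar>p k - q k\<bar> \<le> \<bar>p k - q k\<bar>" by (intro mult_left_le_one_le) auto
    moreover have "f k * (p k - q k) \<le> \<bar>f k\<bar> * \<bar>p k - q k\<bar>" by (simp add: abs_mult[symmetric])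
    ultimately show "f k * (p k - q k) \<le> \<bar>p k - q k\<bar>" by linarith
  qed
  thus ?thesis using l1_simplex_diff[OF assms(1,2)] by linarith
qed

lemma omwu_bad:
  assumes K: "1 \<le> K" and eta: "0 < \<eta>" and u: "u \<in> prob_simplex K" and l0: "\<And>k. lv 0 k = 0"
    and Wsx: "\<And>i. i \<le> n \<Longrightarrow> W i \<in> prob_simplex K"
    and good: "\<And>i k. i \<le> n \<Longrightarrow> bad i = 0 \<Longrightarrow> k < K \<Longrightarrow> W i k = xo \<eta> K lv i k"
    and bad01: "\<And>i. bad i = 0 \<or> bad i = 1"
    and bad0: "bad 0 = 0"
    and lb: "\<And>i k. i \<in> {1..n} \<Longrightarrow> k < K \<Longrightarrow> \<bar>lv i k\<bar> \<le> 1"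
  shows "(\<Sum>i\<in>{1..n}. ip K (lv i) (\<lambda>k. W i k - u k))
     \<le> ln (real K) / \<eta> + \<eta> * (\<Sum>i\<in>{1..n}. (linf_norm K (\<lambda>k. lv i k - lv (i-1) k))^2)
       - 1/(16*\<eta>) * (\<Sum>i\<in>{1..n}. (l1_norm K (\<lambda>k. W i k - W (i-1) k))^2)
       + (5/\<eta> + 4*\<eta>) * (\<Sum>i\<in>{1..n}. bad i)"
proof -
  define X where "X = xo \<eta> K lv"
  have Xsx: "X i \<in> prob_simplex K" for i unfolding X_def xo_def by (rule sm_simplex[OF K])
  have a: "ip K (lv i) (\<lambda>k. W i k - u k) \<le> ip K (lv i) (\<lambda>k. X i k - u k) + 2 * bad i"
    if i: "i \<in> {1..n}" for i
  proof -
    have "ip K (lv i) (\<lambda>k. W i k - u k) = ip K (lv i) (\<lambda>k. X i k - u k) + ip K (lv i) (\<lambda>k. W i k - X i k)"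
      by (simp add: ip_diff)
    moreover have "ip K (lv i) (\<lambda>k. W i k - X i k) \<le> 2 * bad i"
    proof (cases "bad i = 0")
      case True
      then have "ip K (lv i) (\<lambda>k. W i k - X i k) = 0"
        unfolding ip_def X_def using good[of i] i by (intro sum.neutral) auto
      then show ?thesis using True by simp
    next
      case False
      then have "bad i = 1" using bad01 by metis
      moreover have "ip K (lv i) (\<lambda>k. W i k - X i k) \<le> 2"
        by (rule ip_simplex_diff[OF Wsx Xsx]) (use i lb in auto)
      ultimately show ?thesis by simp
    qed
    ultimately show ?thesis by linarith
  qed
  have b: "(l1_norm K (\<lambda>k. W i k - W (i-1) k))^2 \<le> (l1_norm K (\<lambda>k. X i k - X (i-1) k))^2 + 4 * bad i + 4 * bad (i-1)"
    if i: "i \<in> {1..n}" for i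
  proof (cases "bad i = 0 \<and> bad (i-1) = 0")
    case True
    then have "l1_norm K (\<lambda>k. W i k - W (i-1) k) = l1_norm K (\<lambda>k. X i k - X (i-1) k)"
      unfolding l1_norm_def X_def using good[of i] good[of "i-1"] i by (intro sum.cong) auto
    then show ?thesis using True by simp
  next
    case False
    then have "4 \<le> 4 * bad i + 4 * bad (i-1)" using bad01[of i] bad01[of "i-1"] by auto
    moreover have "(l1_norm K (\<lambda>k. W i k - W (i-1) k))^2 \<le> 4"
    proof -
      have "(l1_norm K (\<lambda>k. W i k - W (i-1) k))^2 \<le> 2^2"
        using l1_simplex_diff[OF Wsx[of i] Wsx[of "i-1"]] i l1_nonneg
        by (intro power_mono) auto
      thus ?thesis by simp
    qed
    moreover have "0 \<le> (l1_norm K (\<lambda>k. X i k - X (i-1) k))^2" by simp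
    ultimately show ?thesis by linarith
  qed
  have c: "(\<Sum>i\<in>{1..n}. bad (i-1)) \<le> (\<Sum>i\<in>{1..n}. bad i)"
    by (rule shift_le[of bad, OF bad0]) (metis bad01 order.refl zero_le_one)
  have O: "(\<Sum>i\<in>{1..n}. ip K (lv i) (\<lambda>k. X i k - u k))
     \<le> ln (real K) / \<eta> + \<eta> * (\<Sum>i\<in>{1..n}. (linf_norm K (\<lambda>k. lv i k - lv (i-1) k))^2)
       - 1/(8*\<eta>) * (\<Sum>i\<in>{1..n}. (l1_norm K (\<lambda>k. X i k - X (i-1) k))^2)"
    unfolding X_def by (rule omwu[of K \<eta> u lv, OF K eta u l0])
  define sb where "sb = (\<Sum>i\<in>{1..n}. bad i)"
  define dw where "dw = (\<Sum>i\<in>{1..n}. (l1_norm K (\<lambda>k. W i k - W (i-1) k))^2)"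
  define dx where "dx = (\<Sum>i\<in>{1..n}. (l1_norm K (\<lambda>k. X i k - X (i-1) k))^2)"
  have A1: "(\<Sum>i\<in>{1..n}. ip K (lv i) (\<lambda>k. W i k - u k)) \<le> (\<Sum>i\<in>{1..n}. ip K (lv i) (\<lambda>k. X i k - u k)) + 2 * sb"
  proof -
    have "(\<Sum>i\<in>{1..n}. ip K (lv i) (\<lambda>k. W i k - u k)) \<le> (\<Sum>i\<in>{1..n}. ip K (lv i) (\<lambda>k. X i k - u k) + 2 * bad i)"
      by (rule sum_mono) (rule a)
    thus ?thesis unfolding sb_def by (simp add: sum.distrib sum_distrib_left)
  qed
  have A2: "dw \<le> dx + 8 * sb"
  proof -
    have "dw \<le> (\<Sum>i\<in>{1..n}. (l1_norm K (\<lambda>k. X i k - X (i-1) k))^2 + 4 * bad i + 4 * bad (i-1))"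
      unfolding dw_def by (rule sum_mono) (rule b)
    also have "\<dots> = dx + 4 * sb + 4 * (\<Sum>i\<in>{1..n}. bad (i-1))"
      unfolding dx_def sb_def by (simp add: sum.distrib sum_distrib_left)
    finally show ?thesis using c unfolding sb_def by linarith
  qed
  have dw0: "0 \<le> dw" unfolding dw_def by (simp add: sum_nonneg)
  have sb0: "0 \<le> sb" unfolding sb_def by (rule sum_nonneg) (metis bad01 order.refl zero_le_one)
  have A3: "- 1/(8*\<eta>) * dx \<le> - 1/(16*\<eta>) * dw + sb / \<eta>"
  proof -
    have "1/(8*\<eta>) * dw \<le> 1/(8*\<eta>) * (dx + 8 * sb)"
      using A2 eta by (intro mult_left_mono) auto
    moreover have "1/(16*\<eta>) * dw \<le> 1/(8*\<eta>) * dw"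
      using dw0 eta by (intro mult_right_mono) (auto simp: field_simps)
    moreover have "1/(8*\<eta>) * (dx + 8 * sb) = 1/(8*\<eta>) * dx + sb/\<eta>" using eta by (simp add: field_simps)
    ultimately show ?thesis by simp
  qed
  have A4: "2 * sb + sb/\<eta> \<le> (5/\<eta> + 4*\<eta>) * sb"
  proof -
    have "0 \<le> (\<eta> - 1)^2" by simp
    hence "2 * \<eta> \<le> \<eta>^2 + 1" by (simp add: power2_eq_square algebra_simps)
    hence "2 \<le> \<eta> + 1/\<eta>" using eta by (simp add: field_simps power2_eq_square)
    moreover have "5/\<eta> = 5*(1/\<eta>)" by simp
    moreover have "0 < 1/\<eta>" using eta by simp
    ultimately have "2 + 1/\<eta> \<le> 5/\<eta> + 4*\<eta>" using eta by linarith
    hence "(2 + 1/\<eta>) * sb \<le> (5/\<eta> + 4*\<eta>) * sb" using sb0 by (rule mult_right_mono)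
    thus ?thesis by (simp add: algebra_simps)
  qed
  show ?thesis using A1 O A3 A4 unfolding sb_def[symmetric] dw_def[symmetric] dx_def[symmetric]
    by linarith
qed

lemma pomwu_state_eq:
  "fst (pomwu_state \<eta> K Zs Phis t) z l = (1 / real K) * exp (- \<eta> * (\<Sum>s\<in>{s. s < t \<and> Zs s = z}. Phis s l \<bullet> z))
   \<and> snd (pomwu_state \<eta> K Zs Phis t) z = (if \<exists>s<t. Zs s = z then Phis (Max {s. s < t \<and> Zs s = z}) else (\<lambda>l. 0))"
proof (induction t arbitrary: l)
  case 0
  then show ?case by simp
next
  case (Suc t)
  obtain \<rho> \<Psi> where st: "pomwu_state \<eta> K Zs Phis t = (\<rho>, \<Psi>)" by (cases "pomwu_state \<eta> K Zs Phis t")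
  have IH: "\<rho> z l = (1 / real K) * exp (- \<eta> * (\<Sum>s\<in>{s. s < t \<and> Zs s = z}. Phis s l \<bullet> z))"
    "\<Psi> z = (if \<exists>s<t. Zs s = z then Phis (Max {s. s < t \<and> Zs s = z}) else (\<lambda>l. 0))" for l
    using Suc.IH st by auto
  show ?case
  proof (cases "Zs t = z")
    case True
    have set: "{s. s < Suc t \<and> Zs s = z} = insert t {s. s < t \<and> Zs s = z}" using True by auto
    have fin: "finite {s. s < t \<and> Zs s = z}" by simp
    have mx: "Max {s. s < Suc t \<and> Zs s = z} = t"
      unfolding set by (rule Max_eqI) (use fin in auto)
    have "(\<Sum>s\<in>{s. s < Suc t \<and> Zs s = z}. Phis s l \<bullet> z) = Phis t l \<bullet> z + (\<Sum>s\<in>{s. s < t \<and> Zs s = z}. Phis s l \<bullet> z)"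
      unfolding set by (subst sum.insert) (use fin in auto)
    then show ?thesis using st True IH(1)[of l] IH(2) mx
      by (auto simp: algebra_simps exp_add[symmetric])
  next
    case False
    have set: "{s. s < Suc t \<and> Zs s = z} = {s. s < t \<and> Zs s = z}" using False less_Suc_eq by auto
    have ex: "(\<exists>s<Suc t. Zs s = z) = (\<exists>s<t. Zs s = z)" using False less_Suc_eq by auto
    show ?thesis using st False IH(1)[of l] IH(2) unfolding set ex by auto
  qed
qed

lemma scale_frac: "(c::real) \<noteq> 0 \<Longrightarrow> (c * a) / (\<Sum>k<K. c * b k) = a / (\<Sum>k<K. b k)"
  by (simp add: sum_distrib_left[symmetric])

lemma w_sm:
  assumes "1 \<le> K"
  shows "pomwu_weights \<eta> K Zs Phis Zhat t = sm K (\<lambda>k. - \<eta> * ((\<Sum>s\<in>{s. s < t \<and> Zs s = Zhat t}. Phis s k \<bullet> Zhat t)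
        + snd (pomwu_state \<eta> K Zs Phis t) (Zhat t) k \<bullet> Zhat t))"
proof
  fix l
  obtain \<rho> \<Psi> where st: "pomwu_state \<eta> K Zs Phis t = (\<rho>, \<Psi>)" by (cases "pomwu_state \<eta> K Zs Phis t")
  define z where "z = Zhat t"
  define c where "c = (\<lambda>k. (\<Sum>s\<in>{s. s < t \<and> Zs s = z}. Phis s k \<bullet> z))"
  have rho: "\<rho> z k = (1 / real K) * exp (- \<eta> * c k)" for k
    using pomwu_state_eq[of \<eta> K Zs Phis t z k] st unfolding c_def by simp
  have psi: "snd (pomwu_state \<eta> K Zs Phis t) z = \<Psi> z" using st by simp
  have num: "\<rho> z k * exp (- \<eta> * (\<Psi> z k \<bullet> z)) = (1 / real K) * exp (- \<eta> * (c k + \<Psi> z k \<bullet> z))" for k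
    unfolding rho by (simp add: algebra_simps exp_add[symmetric])
  have "pomwu_weights \<eta> K Zs Phis Zhat t l
      = ((1 / real K) * exp (- \<eta> * (c l + \<Psi> z l \<bullet> z))) / (\<Sum>k<K. (1 / real K) * exp (- \<eta> * (c k + \<Psi> z k \<bullet> z)))"
    unfolding pomwu_weights_def st z_def[symmetric] using num by simp
  also have "\<dots> = sm K (\<lambda>k. - \<eta> * (c k + \<Psi> z k \<bullet> z)) l"
    unfolding sm_def using assms by (intro scale_frac) simp
  finally show "pomwu_weights \<eta> K Zs Phis Zhat t l = sm K (\<lambda>k. - \<eta> * ((\<Sum>s\<in>{s. s < t \<and> Zs s = Zhat t}. Phis s k \<bullet> Zhat t)
        + snd (pomwu_state \<eta> K Zs Phis t) (Zhat t) k \<bullet> Zhat t)) l"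
    unfolding c_def z_def psi[unfolded z_def] by simp
qed

lemma occ_basic:
  "set (occ_rounds T Zs z) = {t. t < T \<and> Zs t = z}"
  "distinct (occ_rounds T Zs z)"
  "sorted_wrt (<) (occ_rounds T Zs z)"
  unfolding occ_rounds_def by (auto simp: strict_sorted_list_of_set)

lemma occ_lt:
  assumes "j < length (occ_rounds T Zs z)"
  shows "occ_rounds T Zs z ! j < T \<and> Zs (occ_rounds T Zs z ! j) = z"
  using nth_mem[OF assms] occ_basic(1)[of T Zs z] by auto

lemma occ_before:
  assumes j: "j < length (occ_rounds T Zs z)"
  shows "{s. s < occ_rounds T Zs z ! j \<and> Zs s = z} = (\<lambda>r. occ_rounds T Zs z ! r) ` {..<j}"
proof -
  define ts where "ts = occ_rounds T Zs z"
  have srt: "sorted_wrt (<) ts" and st: "set ts = {t. t < T \<and> Zs t = z}" unfolding ts_def using occ_basic[of T Zs z] by auto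
  have lt: "ts ! r < ts ! j \<longleftrightarrow> r < j" if "r < length ts" for r
  proof
    assume "ts ! r < ts ! j"
    show "r < j"
    proof (rule ccontr)
      assume "\<not> r < j"
      hence "r = j \<or> j < r" by auto
      thus False using sorted_wrt_nth_less[OF srt, of j r] that \<open>ts ! r < ts ! j\<close> by auto
    qed
  next
    assume "r < j" thus "ts ! r < ts ! j" using sorted_wrt_nth_less[OF srt, of r j] j unfolding ts_def by auto
  qed
  have "{s. s < ts ! j \<and> Zs s = z} = (\<lambda>r. ts ! r) ` {..<j}"
  proof (intro set_eqI iffI)
    fix s assume s: "s \<in> {s. s < ts ! j \<and> Zs s = z}"
    have "ts ! j < T" using occ_lt[OF j] unfolding ts_def by simp
    hence "s \<in> set ts" using s st by auto
    then obtain r where r: "r < length ts" "s = ts ! r" by (auto simp: in_set_conv_nth)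
    thus "s \<in> (\<lambda>r. ts ! r) ` {..<j}" using lt[OF r(1)] s by auto
  next
    fix s assume "s \<in> (\<lambda>r. ts ! r) ` {..<j}"
    then obtain r where r: "r < j" "s = ts ! r" by auto
    have rl: "r < length ts" using r j unfolding ts_def by simp
    hence "ts ! r \<in> set ts" by simp
    thus "s \<in> {s. s < ts ! j \<and> Zs s = z}" using st r lt[OF rl] by auto
  qed
  thus ?thesis unfolding ts_def .
qed

lemma occ_sum:
  assumes j: "j < length (occ_rounds T Zs z)"
  shows "(\<Sum>s\<in>{s. s < occ_rounds T Zs z ! j \<and> Zs s = z}. f s) = (\<Sum>r<j. f (occ_rounds T Zs z ! r))"
proof -
  have "inj_on (\<lambda>r. occ_rounds T Zs z ! r) {..<j}"
    using inj_on_nth[OF occ_basic(2)[of T Zs z], of "{..<j}"] j by auto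
  thus ?thesis unfolding occ_before[OF j] by (simp add: sum.reindex)
qed

lemma occ_ex:
  assumes j: "j < length (occ_rounds T Zs z)"
  shows "(\<exists>s<occ_rounds T Zs z ! j. Zs s = z) \<longleftrightarrow> 0 < j"
  using occ_before[OF j] by (auto simp: set_eq_iff)

lemma occ_max:
  assumes j: "j < length (occ_rounds T Zs z)" and j0: "0 < j"
  shows "Max {s. s < occ_rounds T Zs z ! j \<and> Zs s = z} = occ_rounds T Zs z ! (j-1)"
proof -
  define ts where "ts = occ_rounds T Zs z"
  have srt: "sorted_wrt (<) ts" unfolding ts_def using occ_basic[of T Zs z] by auto
  have "Max ((\<lambda>r. ts ! r) ` {..<j}) = ts ! (j-1)"
  proof (rule Max_eqI)
    show "finite ((\<lambda>r. ts ! r) ` {..<j})" by simp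
    show "ts ! (j-1) \<in> (\<lambda>r. ts ! r) ` {..<j}" using j0 by auto
    fix y assume "y \<in> (\<lambda>r. ts ! r) ` {..<j}"
    then obtain r where r: "r < j" "y = ts ! r" by auto
    show "y \<le> ts ! (j-1)"
    proof (cases "r = j - 1")
      case True then show ?thesis using r by simp
    next
      case False
      hence "r < j - 1" using r by simp
      moreover have "j - 1 < length ts" using j unfolding ts_def by simp
      ultimately have "ts ! r < ts ! (j-1)" using sorted_wrt_nth_less[OF srt, of r "j-1"] by blast
      thus ?thesis using r by simp
    qed
  qed
  thus ?thesis using occ_before[OF j] unfolding ts_def by simp
qed

lemma reindex:
  fixes f :: "nat \<Rightarrow> real"
  assumes fin: "finite Zset" and Z: "\<forall>t<T. Zs t \<in> Zset"
  shows "(\<Sum>t<T. f t) = (\<Sum>z\<in>Zset. \<Sum>i\<in>{1..length (occ_rounds T Zs z)}. f (occ_rounds T Zs z ! (i-1)))"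
proof -
  have "(\<Sum>t<T. f t) = (\<Sum>t<T. \<Sum>z\<in>Zset. if Zs t = z then f t else 0)"
    using Z fin by (intro sum.cong) (auto simp: sum.delta)
  also have "\<dots> = (\<Sum>z\<in>Zset. \<Sum>t<T. if Zs t = z then f t else 0)" by (rule sum.swap)
  also have "\<dots> = (\<Sum>z\<in>Zset. \<Sum>i\<in>{1..length (occ_rounds T Zs z)}. f (occ_rounds T Zs z ! (i-1)))"
  proof (rule sum.cong[OF refl])
    fix z
    have "(\<Sum>t<T. if Zs t = z then f t else 0) = (\<Sum>t\<in>{t. t < T \<and> Zs t = z}. f t)"
      by (simp add: sum.inter_filter[symmetric])
    also have "\<dots> = (\<Sum>t\<in>set (occ_rounds T Zs z). f t)" using occ_basic(1)[of T Zs z] by simp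
    also have "\<dots> = sum_list (map f (occ_rounds T Zs z))" using occ_basic(2)[of T Zs z] by (rule sum.distinct_set_conv_list)
    also have "\<dots> = (\<Sum>r<length (occ_rounds T Zs z). f (occ_rounds T Zs z ! r))"
      by (simp add: sum_list_sum_nth atLeast0LessThan)
    also have "\<dots> = (\<Sum>i\<in>{1..length (occ_rounds T Zs z)}. f (occ_rounds T Zs z ! (i-1)))"
      using sum.atLeast1_atMost_eq[of "\<lambda>i. f (occ_rounds T Zs z ! (i-1))"] by simp
    finally show "(\<Sum>t<T. if Zs t = z then f t else 0) = \<dots>" .
  qed
  finally show ?thesis .
qed

lemma phi_bound:
  assumes jJ: "j < J" and kK: "k < K"
    and Wsx: "\<And>i. i < J \<Longrightarrow> i \<noteq> j \<Longrightarrow> Wt i \<in> prob_simplex K"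
    and bc: "\<And>a. a \<in> profiles J K \<Longrightarrow> \<bar>\<phi> j a \<bullet> z\<bar> \<le> 1"
  shows "\<bar>Phi_mat J K \<phi> j Wt k \<bullet> z\<bar> \<le> 1"
proof -
  define A where "A = {a\<in>profiles J K. a j = k}"
  define c where "c = (\<lambda>a. \<Prod>i\<in>{..<J} - {j}. Wt i (a i))"
  define B where "B = (\<lambda>x. if x = j then {k} else {..<K})"
  define f where "f = (\<lambda>x y. if x = j then 1 else Wt x y)"
  have AP: "A = PiE {..<J} B"
  proof (intro set_eqI iffI)
    fix a assume "a \<in> A"
    hence a1: "\<forall>x\<in>{..<J}. a x \<in> {..<K}" "a \<in> extensional {..<J}" "a j = k"
      unfolding A_def profiles_def PiE_iff by auto
    have "\<forall>x\<in>{..<J}. a x \<in> B x" unfolding B_def using a1 by auto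
    thus "a \<in> PiE {..<J} B" unfolding PiE_iff using a1 by blast
  next
    fix a assume "a \<in> PiE {..<J} B"
    hence a1: "\<forall>x\<in>{..<J}. a x \<in> B x" "a \<in> extensional {..<J}" unfolding PiE_iff by auto
    have "a j \<in> B j" using a1(1) jJ by auto
    hence "a j = k" unfolding B_def by simp
    moreover have "\<forall>x\<in>{..<J}. a x \<in> {..<K}"
    proof
      fix x assume x: "x \<in> {..<J}"
      have "a x \<in> B x" using a1(1) x by blast
      thus "a x \<in> {..<K}" using kK unfolding B_def by (cases "x = j") auto
    qed
    ultimately show "a \<in> A" unfolding A_def profiles_def PiE_iff using a1(2) by blast
  qed
  have c0: "0 \<le> c a" if "a \<in> A" for a
    unfolding c_def
  proof (rule prod_nonneg)
    fix i assume i: "i \<in> {..<J} - {j}"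
    have "a i < K" using that i unfolding A_def profiles_def by (auto simp: PiE_iff)
    thus "0 \<le> Wt i (a i)" using Wsx[of i] i unfolding prob_simplex_def by auto
  qed
  have csum: "(\<Sum>a\<in>A. c a) = 1"
  proof -
    have "(\<Prod>x\<in>{..<J}. \<Sum>y\<in>B x. f x y) = (\<Sum>g\<in>PiE {..<J} B. \<Prod>x\<in>{..<J}. f x (g x))"
      by (rule prod_sum_PiE) (auto simp: B_def)
    moreover have "(\<Prod>x\<in>{..<J}. \<Sum>y\<in>B x. f x y) = 1"
      using Wsx unfolding B_def f_def prob_simplex_def by (intro prod.neutral) auto
    moreover have "(\<Prod>x\<in>{..<J}. f x (g x)) = c g" for g
    proof -
      have "(\<Prod>x\<in>{..<J}. f x (g x)) = f j (g j) * (\<Prod>x\<in>{..<J} - {j}. f x (g x))"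
        using jJ by (simp add: prod.remove)
      also have "\<dots> = c g" unfolding c_def f_def by (auto intro!: prod.cong)
      finally show ?thesis .
    qed
    ultimately show ?thesis unfolding AP by simp
  qed
  have "Phi_mat J K \<phi> j Wt k \<bullet> z = (\<Sum>a\<in>A. c a * (\<phi> j a \<bullet> z))"
    unfolding Phi_mat_def A_def c_def by (simp add: inner_sum_left)
  also have "\<bar>\<dots>\<bar> \<le> (\<Sum>a\<in>A. \<bar>c a * (\<phi> j a \<bullet> z)\<bar>)" by (rule sum_abs)
  also have "\<dots> \<le> (\<Sum>a\<in>A. c a)"
  proof (rule sum_mono)
    fix a assume a: "a \<in> A"
    have "\<bar>\<phi> j a \<bullet> z\<bar> \<le> 1" using a bc unfolding A_def by auto
    thus "\<bar>c a * (\<phi> j a \<bullet> z)\<bar> \<le> c a" using c0[OF a] by (simp add: abs_mult mult_left_le)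
  qed
  finally show ?thesis using csum by simp
qed

lemma uniform_simplex: "1 \<le> K \<Longrightarrow> (\<lambda>_. 1 / real K) \<in> prob_simplex K"
  unfolding prob_simplex_def by auto

lemma sm_const0: "1 \<le> K \<Longrightarrow> sm K (\<lambda>k. 0) k = 1 / real K"
  unfolding sm_def by simp

lemma per_context:
  fixes Phis :: "nat \<Rightarrow> nat \<Rightarrow> real^'d" and z :: "real^'d" and Zs Zhat :: "nat \<Rightarrow> real^'d" and T K :: nat and \<eta> :: real
  assumes K: "1 \<le> K" and eta: "0 < \<eta>" and u: "u \<in> prob_simplex K"
    and lb: "\<And>t k. t < T \<Longrightarrow> k < K \<Longrightarrow> \<bar>Phis t k \<bullet> Zs t\<bar> \<le> 1"
  defines "ts \<equiv> occ_rounds T Zs z"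
  defines "w \<equiv> pomwu_weights \<eta> K Zs Phis Zhat"
  shows "(\<Sum>i\<in>{1..length ts}. ip K (\<lambda>k. at_occ Phis (\<lambda>_. 0) ts i k \<bullet> z)
              (\<lambda>k. at_occ w (\<lambda>_. 1 / real K) ts i k - u k))
     \<le> ln (real K) / \<eta>
       + \<eta> * (\<Sum>i\<in>{1..length ts}. (linf_norm K (\<lambda>k. (at_occ Phis (\<lambda>_. 0) ts i k - at_occ Phis (\<lambda>_. 0) ts (i - 1) k) \<bullet> z))\<^sup>2)
       - 1/(16*\<eta>) * (\<Sum>i\<in>{1..length ts}. (l1_norm K (\<lambda>k. at_occ w (\<lambda>_. 1 / real K) ts i k - at_occ w (\<lambda>_. 1 / real K) ts (i - 1) k))\<^sup>2)
       + (5/\<eta> + 4*\<eta>) * (\<Sum>i\<in>{1..length ts}. if 1 \<le> i \<and> Zhat (ts ! (i-1)) \<noteq> z then 1 else 0)"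
proof -
  define n where "n = length ts"
  define lv where "lv = (\<lambda>i k. at_occ Phis (\<lambda>_. 0) ts i k \<bullet> z)"
  define W where "W = at_occ w (\<lambda>_. 1 / real K) ts"
  define bad :: "nat \<Rightarrow> real" where "bad = (\<lambda>i. if 1 \<le> i \<and> Zhat (ts ! (i-1)) \<noteq> z then 1 else 0)"
  have l0: "lv 0 k = 0" for k unfolding lv_def at_occ_def by simp
  have lvi: "lv i k = Phis (ts ! (i-1)) k \<bullet> z" if "1 \<le> i" for i k
    unfolding lv_def at_occ_def using that by simp
  have Wi: "W i = w (ts ! (i-1))" if "1 \<le> i" for i
    unfolding W_def at_occ_def using that by simp
  have W0: "W 0 = (\<lambda>_. 1 / real K)" unfolding W_def at_occ_def by simp
  have wsm: "w t = sm K (\<lambda>k. - \<eta> * ((\<Sum>s\<in>{s. s < t \<and> Zs s = Zhat t}. Phis s k \<bullet> Zhat t)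
        + snd (pomwu_state \<eta> K Zs Phis t) (Zhat t) k \<bullet> Zhat t))" for t
    unfolding w_def by (rule w_sm[OF K])
  have Wsx: "W i \<in> prob_simplex K" if "i \<le> n" for i
  proof (cases "i = 0")
    case True then show ?thesis using W0 uniform_simplex[OF K] by simp
  next
    case False then show ?thesis using Wi[of i] wsm sm_simplex[OF K] by simp
  qed
  have good: "W i k = xo \<eta> K lv i k" if i: "i \<le> n" and b: "bad i = 0" and k: "k < K" for i k
  proof (cases "i = 0")
    case True
    have "xo \<eta> K lv 0 k = sm K (\<lambda>k. 0) k" unfolding xo_def cum_def using l0 by simp
    then show ?thesis using True W0 sm_const0[OF K] by simp
  next
    case False
    define t where "t = ts ! (i-1)"
    have jl: "i - 1 < length ts" using i False unfolding n_def by simp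
    have zh: "Zhat t = z" using b False unfolding bad_def t_def by (auto split: if_splits)
    have cumeq: "(\<Sum>s\<in>{s. s < t \<and> Zs s = z}. Phis s k \<bullet> z) = cum lv (i-1) k" for k
    proof -
      have "(\<Sum>s\<in>{s. s < t \<and> Zs s = z}. Phis s k \<bullet> z) = (\<Sum>r<i-1. Phis (ts ! r) k \<bullet> z)"
        unfolding t_def ts_def by (rule occ_sum[OF jl[unfolded ts_def]])
      also have "\<dots> = cum lv (i-1) k"
        unfolding cum_def using sum.atLeast1_atMost_eq[of "\<lambda>r. lv r k" "i-1"] lvi by simp
      finally show ?thesis .
    qed
    have psieq: "snd (pomwu_state \<eta> K Zs Phis t) z k \<bullet> z = lv (i-1) k" for k
    proof (cases "i - 1 = 0")
      case True
      have "\<not> (\<exists>s<t. Zs s = z)" using occ_ex[OF jl[unfolded ts_def]] True unfolding t_def ts_def by simp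
      then show ?thesis using pomwu_state_eq[of \<eta> K Zs Phis t z] True l0 by auto
    next
      case False
      have ex: "\<exists>s<t. Zs s = z" using occ_ex[OF jl[unfolded ts_def]] False unfolding t_def ts_def by simp
      have mx: "Max {s. s < t \<and> Zs s = z} = ts ! (i - 1 - 1)"
        using occ_max[OF jl[unfolded ts_def]] False unfolding t_def ts_def by simp
      show ?thesis using pomwu_state_eq[of \<eta> K Zs Phis t z] ex mx lvi[of "i-1"] False by simp
    qed
    have "W i = w t" using Wi[of i] False unfolding t_def by simp
    also have "\<dots> = xo \<eta> K lv i"
      unfolding xo_def wsm zh cumeq psieq ..
    finally have "W i = xo \<eta> K lv i" .
    then show ?thesis by simp
  qed
  have bad01: "bad i = 0 \<or> bad i = 1" for i unfolding bad_def by simp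
  have bad0: "bad 0 = 0" unfolding bad_def by simp
  have lbv: "\<bar>lv i k\<bar> \<le> 1" if "i \<in> {1..n}" "k < K" for i k
  proof -
    have jl: "i - 1 < length ts" using that unfolding n_def by auto
    have "ts ! (i-1) < T \<and> Zs (ts ! (i-1)) = z" using occ_lt[OF jl[unfolded ts_def]] unfolding ts_def .
    then show ?thesis using lvi[of i k] lb[of "ts ! (i-1)" k] that by auto
  qed
  have main: "(\<Sum>i\<in>{1..n}. ip K (lv i) (\<lambda>k. W i k - u k))
     \<le> ln (real K) / \<eta> + \<eta> * (\<Sum>i\<in>{1..n}. (linf_norm K (\<lambda>k. lv i k - lv (i-1) k))^2)
       - 1/(16*\<eta>) * (\<Sum>i\<in>{1..n}. (l1_norm K (\<lambda>k. W i k - W (i-1) k))^2)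
       + (5/\<eta> + 4*\<eta>) * (\<Sum>i\<in>{1..n}. bad i)"
    by (rule omwu_bad[of K \<eta> u lv n W bad, OF K eta u l0 Wsx good bad01 bad0 lbv])
  have linfeq: "(\<lambda>k. lv i k - lv (i-1) k) = (\<lambda>k. (at_occ Phis (\<lambda>_. 0) ts i k - at_occ Phis (\<lambda>_. 0) ts (i - 1) k) \<bullet> z)" for i
    unfolding lv_def by (simp add: inner_diff_left)
  show ?thesis using main unfolding n_def W_def bad_def lv_def by (simp add: inner_diff_left)
qed

theorem proposition5:
  fixes J K j T :: nat and \<eta> :: real
    and \<phi> :: "nat \<Rightarrow> (nat \<Rightarrow> nat) \<Rightarrow> real^'d"
    and Zset :: "(real^'d) set"
    and Zs Zhat :: "nat \<Rightarrow> real^'d"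
    and W :: "nat \<Rightarrow> nat \<Rightarrow> nat \<Rightarrow> real"
    and Phis :: "nat \<Rightarrow> nat \<Rightarrow> real^'d"
    and w :: "nat \<Rightarrow> nat \<Rightarrow> real"
    and L m :: nat
  assumes "1 \<le> J" and "j < J" and "1 \<le> K"
    and "finite Zset"
    and bounded_cost: "\<forall>i<J. \<forall>a\<in>profiles J K. \<forall>Z\<in>Zset. \<bar>\<phi> i a \<bullet> Z\<bar> \<le> 1"
    and "\<eta> > 0"
    and "\<forall>t<T. Zs t \<in> Zset" and "\<forall>t<T. Zhat t \<in> Zset"
    and "\<forall>t<T. \<forall>i<J. i \<noteq> j \<longrightarrow> W t i \<in> prob_simplex K"
  defines "Phis \<equiv> (\<lambda>t. Phi_mat J K \<phi> j (W t))"
    and "w \<equiv> pomwu_weights \<eta> K Zs Phis Zhat"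
    and "L \<equiv> card {t. t < T \<and> Zhat t \<noteq> Zs t}"
    and "m \<equiv> card Zset"
  shows "contextual_regret K Zset T Zs Phis w
    \<le> ((5 + ln (real K)) * real L + real m * ln (real K)) / \<eta>
      + \<eta> * ((\<Sum>z\<in>Zset. \<Sum>i=1..length (occ_rounds T Zs z).
                (linf_norm K (\<lambda>k. (at_occ Phis (\<lambda>_. 0) (occ_rounds T Zs z) i k
                                   - at_occ Phis (\<lambda>_. 0) (occ_rounds T Zs z) (i - 1) k) \<bullet> z))\<^sup>2)
             + 4 * real L)
      - 1 / (16 * \<eta>) * (\<Sum>z\<in>Zset. \<Sum>i=1..length (occ_rounds T Zs z).
                (l1_norm K (\<lambda>k. at_occ w (\<lambda>_. 1 / real K) (occ_rounds T Zs z) i k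
                               - at_occ w (\<lambda>_. 1 / real K) (occ_rounds T Zs z) (i - 1) k))\<^sup>2)"
proof -
  note K = \<open>1 \<le> K\<close> and eta = \<open>\<eta> > 0\<close>
  have lb: "\<bar>Phis t k \<bullet> Zs t\<bar> \<le> 1" if "t < T" "k < K" for t k
    unfolding Phis_def
  proof (rule phi_bound[OF \<open>j < J\<close> \<open>k < K\<close>])
    show "\<And>i. i < J \<Longrightarrow> i \<noteq> j \<Longrightarrow> W t i \<in> prob_simplex K" using assms(9) that by auto
    show "\<And>a. a \<in> profiles J K \<Longrightarrow> \<bar>\<phi> j a \<bullet> Zs t\<bar> \<le> 1" using bounded_cost assms(2,7) that by auto
  qed
  define RHS where "RHS = ((5 + ln (real K)) * real L + real m * ln (real K)) / \<eta>
      + \<eta> * ((\<Sum>z\<in>Zset. \<Sum>i=1..length (occ_rounds T Zs z).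
                (linf_norm K (\<lambda>k. (at_occ Phis (\<lambda>_. 0) (occ_rounds T Zs z) i k
                                   - at_occ Phis (\<lambda>_. 0) (occ_rounds T Zs z) (i - 1) k) \<bullet> z))\<^sup>2)
             + 4 * real L)
      - 1 / (16 * \<eta>) * (\<Sum>z\<in>Zset. \<Sum>i=1..length (occ_rounds T Zs z).
                (l1_norm K (\<lambda>k. at_occ w (\<lambda>_. 1 / real K) (occ_rounds T Zs z) i k
                               - at_occ w (\<lambda>_. 1 / real K) (occ_rounds T Zs z) (i - 1) k))\<^sup>2)"
  define SL where "SL = (\<Sum>z\<in>Zset. \<Sum>i=1..length (occ_rounds T Zs z).
                (linf_norm K (\<lambda>k. (at_occ Phis (\<lambda>_. 0) (occ_rounds T Zs z) i k
                                   - at_occ Phis (\<lambda>_. 0) (occ_rounds T Zs z) (i - 1) k) \<bullet> z))\<^sup>2)"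
  define SW where "SW = (\<Sum>z\<in>Zset. \<Sum>i=1..length (occ_rounds T Zs z).
                (l1_norm K (\<lambda>k. at_occ w (\<lambda>_. 1 / real K) (occ_rounds T Zs z) i k
                               - at_occ w (\<lambda>_. 1 / real K) (occ_rounds T Zs z) (i - 1) k))\<^sup>2)"
  define SB where "SB = (\<Sum>z\<in>Zset. \<Sum>i\<in>{1..length (occ_rounds T Zs z)}.
       if 1 \<le> i \<and> Zhat (occ_rounds T Zs z ! (i-1)) \<noteq> z then 1 else (0::real))"
  have SBL: "SB = real L"
  proof -
    have "real L = (\<Sum>t<T. if Zhat t \<noteq> Zs t then 1 else (0::real))"
      unfolding L_def by (simp add: sum.If_cases Int_def)
    also have "\<dots> = SB"
      unfolding SB_def
    proof (subst reindex[OF \<open>finite Zset\<close> assms(7)], intro sum.cong refl)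
      fix z i assume "i \<in> {1..length (occ_rounds T Zs z)}"
      hence il: "i - 1 < length (occ_rounds T Zs z)" and "1 \<le> i" by auto
      have "Zs (occ_rounds T Zs z ! (i - 1)) = z" using occ_lt[OF il] by simp
      then show "(if Zhat (occ_rounds T Zs z ! (i - 1)) \<noteq> Zs (occ_rounds T Zs z ! (i - 1)) then 1 else 0)
          = (if 1 \<le> i \<and> Zhat (occ_rounds T Zs z ! (i - 1)) \<noteq> z then 1 else (0::real))"
        using \<open>1 \<le> i\<close> by simp
    qed
    finally show ?thesis by simp
  qed
  define S where "S = {\<pi>. \<forall>z\<in>Zset. \<pi> z \<in> prob_simplex K}"
  have Sne: "S \<noteq> {}"
  proof -
    have "(\<lambda>z. \<lambda>_. 1 / real K) \<in> S" unfolding S_def using uniform_simplex[OF K] by auto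
    thus ?thesis by blast
  qed
  have key: "(\<Sum>t<T. lincost K (Phis t) (w t) (Zs t)) - RHS \<le> (\<Sum>t<T. lincost K (Phis t) (\<pi> (Zs t)) (Zs t))"
    if pi: "\<pi> \<in> S" for \<pi>
  proof -
    have "(\<Sum>t<T. lincost K (Phis t) (w t) (Zs t)) - (\<Sum>t<T. lincost K (Phis t) (\<pi> (Zs t)) (Zs t))
        = (\<Sum>t<T. lincost K (Phis t) (w t) (Zs t) - lincost K (Phis t) (\<pi> (Zs t)) (Zs t))"
      by (simp add: sum_subtractf)
    also have "\<dots> = (\<Sum>z\<in>Zset. \<Sum>i\<in>{1..length (occ_rounds T Zs z)}.
        ip K (\<lambda>k. at_occ Phis (\<lambda>_. 0) (occ_rounds T Zs z) i k \<bullet> z)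
              (\<lambda>k. at_occ w (\<lambda>_. 1 / real K) (occ_rounds T Zs z) i k - \<pi> z k))"
    proof (subst reindex[OF \<open>finite Zset\<close> assms(7)], intro sum.cong refl)
      fix z i assume "i \<in> {1..length (occ_rounds T Zs z)}"
      hence il: "i - 1 < length (occ_rounds T Zs z)" and i1: "1 \<le> i" by auto
      have zz: "Zs (occ_rounds T Zs z ! (i - 1)) = z" using occ_lt[OF il] by simp
      show "lincost K (Phis (occ_rounds T Zs z ! (i - 1))) (w (occ_rounds T Zs z ! (i - 1))) (Zs (occ_rounds T Zs z ! (i - 1))) -
          lincost K (Phis (occ_rounds T Zs z ! (i - 1))) (\<pi> (Zs (occ_rounds T Zs z ! (i - 1)))) (Zs (occ_rounds T Zs z ! (i - 1)))
          = ip K (\<lambda>k. at_occ Phis (\<lambda>_. 0) (occ_rounds T Zs z) i k \<bullet> z)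
              (\<lambda>k. at_occ w (\<lambda>_. 1 / real K) (occ_rounds T Zs z) i k - \<pi> z k)"
        unfolding zz lincost_def ip_def at_occ_def using i1
        by (simp add: sum_subtractf algebra_simps)
    qed
    also have "\<dots> \<le> (\<Sum>z\<in>Zset. ln (real K) / \<eta>
       + \<eta> * (\<Sum>i\<in>{1..length (occ_rounds T Zs z)}. (linf_norm K (\<lambda>k. (at_occ Phis (\<lambda>_. 0) (occ_rounds T Zs z) i k - at_occ Phis (\<lambda>_. 0) (occ_rounds T Zs z) (i - 1) k) \<bullet> z))\<^sup>2)
       - 1/(16*\<eta>) * (\<Sum>i\<in>{1..length (occ_rounds T Zs z)}. (l1_norm K (\<lambda>k. at_occ w (\<lambda>_. 1 / real K) (occ_rounds T Zs z) i k - at_occ w (\<lambda>_. 1 / real K) (occ_rounds T Zs z) (i - 1) k))\<^sup>2)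
       + (5/\<eta> + 4*\<eta>) * (\<Sum>i\<in>{1..length (occ_rounds T Zs z)}. if 1 \<le> i \<and> Zhat (occ_rounds T Zs z ! (i-1)) \<noteq> z then 1 else 0))"
    proof (rule sum_mono, goal_cases)
      case (1 z)
      have u: "\<pi> z \<in> prob_simplex K" using pi 1 unfolding S_def by auto
      show ?case
        unfolding w_def by (rule per_context[OF K eta u lb])
    qed
    also have "\<dots> = real m * (ln (real K) / \<eta>) + \<eta> * SL - 1/(16*\<eta>) * SW + (5/\<eta> + 4*\<eta>) * SB"
      unfolding SL_def SW_def SB_def m_def
      by (simp add: sum.distrib sum_subtractf sum_distrib_left)
    also have "\<dots> \<le> RHS"
    proof -
      have "0 \<le> ln (real K) * real L / \<eta>" using K eta by simp
      moreover have "RHS = 5 * real L / \<eta> + ln (real K) * real L / \<eta> + real m * (ln (real K) / \<eta>)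
          + \<eta> * SL + 4 * \<eta> * real L - 1/(16*\<eta>) * SW"
        unfolding RHS_def SL_def[symmetric] SW_def[symmetric]
        by (simp add: algebra_simps add_divide_distrib)
      moreover have "(5/\<eta> + 4*\<eta>) * SB = 5 * real L / \<eta> + 4 * \<eta> * real L"
        unfolding SBL by (simp add: algebra_simps)
      ultimately show ?thesis by linarith
    qed
    finally show ?thesis by linarith
  qed
  have "(\<Sum>t<T. lincost K (Phis t) (w t) (Zs t)) - RHS
      \<le> (INF \<pi>\<in>S. \<Sum>t<T. lincost K (Phis t) (\<pi> (Zs t)) (Zs t))"
    by (rule cINF_greatest[OF Sne key])
  thus ?thesis unfolding contextual_regret_def S_def[symmetric] RHS_def by linarith
qed

end
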